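(* Let $\Omega$ be a Polish space and $(T(t))_{t\ge0}\subset\mathscr{L}(\mathscr{M}(\Omega),\sigma)$ a Markovian semigroup with transition kernels $k_t$. If it is $t_0$-regular for some $t_0>0$, then it is $s$-regular for every $s\ge t_0$, and moreover the measures $k_s(x,\cdot)$ and $k_t(y,\cdot)$ are equivalent for all $s,t\ge t_0$ and all $x,y\in\Omega$.
   Context: $\mathscr{M}(\Omega)$: finite signed Borel measures. A weakly continuous operator is one of the form $(T\mu)(A)=\int k(x,A)\,d\mu(x)$ with $k$ a bounded transition kernel (map $\Omega\times\mathscr{B}(\Omega)\to\mathbb{R}$, signed measure in the second variable, Borel measurable in the first, $\sup_x\lvert k\rvert(x,\Omega)<\infty$); $\mathscr{L}(\mathscr{M}(\Omega),\sigma)$ is the space of such operators. A semigroup $(T(t))_{t\ge0}$ satisfies $T(0)=I$ and $T(t+s)=T(t)T(s)$; $k_t$ denotes the kernel of $T(t)$. It is Markovian if each $k_t(x,\cdot)$ is a probability measure. For $t_0>0$ it is $t_0$-regular if $k_{t_0}(x,\cdot)$ and $k_{t_0}(y,\cdot)$ are equivalent (mutually absolutely continuous) for all $x,y\in\Omega$. *)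

theory Defs
  imports "HOL-Probability.Probability"
begin

text \<open>A Markovian semigroup of weakly continuous operators is given by its kernels
  k t (t \<ge> 0): every k t x is a Borel probability measure, x \<mapsto> k t x A
  is Borel measurable, T(0) = I (i.e. k 0 x is the Dirac measure at x) and
  T(t+s) = T(t)T(s), which in terms of kernels is the Chapman-Kolmogorov
  identity k (t+s) x A = \<integral> k t z A d(k s x)(z).\<close>

definition markov_kernel_semigroup :: "(real \<Rightarrow> 'a::topological_space \<Rightarrow> 'a measure) \<Rightarrow> bool" where
  "markov_kernel_semigroup k \<longleftrightarrow>
     (\<forall>t\<ge>0. \<forall>x. sets (k t x) = sets borel \<and> prob_space (k t x)) \<and>
     (\<forall>t\<ge>0. \<forall>A\<in>sets borel. (\<lambda>x. measure (k t x) A) \<in> borel_measurable borel) \<and>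
     (\<forall>x. k 0 x = return borel x) \<and>
     (\<forall>t\<ge>0. \<forall>s\<ge>0. \<forall>x. \<forall>A\<in>sets borel.
        measure (k (t + s) x) A = (\<integral>z. measure (k t z) A \<partial>(k s x)))"

definition equiv_measures :: "'a measure \<Rightarrow> 'a measure \<Rightarrow> bool" where
  "equiv_measures M N \<longleftrightarrow> absolutely_continuous M N \<and> absolutely_continuous N M"

definition regular_at :: "(real \<Rightarrow> 'a \<Rightarrow> 'a measure) \<Rightarrow> real \<Rightarrow> bool" where
  "regular_at k t0 \<longleftrightarrow> (\<forall>x y. equiv_measures (k t0 x) (k t0 y))"

end

theory Submission
  imports Defs
begin

lemma null_iff_prob:
  assumes "prob_space M"
  shows "A \<in> null_sets M \<longleftrightarrow> A \<in> sets M \<and> measure M A = 0"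
  using assms by (auto simp: prob_space_def finite_measure.emeasure_eq_measure)

lemma key:
  fixes k :: "real \<Rightarrow> 'a::polish_space \<Rightarrow> 'a measure"
  assumes mk: "markov_kernel_semigroup k" and t0: "t0 > 0" and reg: "regular_at k t0"
    and s: "s \<ge> t0" and A: "A \<in> sets borel"
  shows "measure (k s x) A = 0 \<longleftrightarrow> measure (k t0 y) A = 0"
proof -
  have P: "\<And>t x. t \<ge> 0 \<Longrightarrow> sets (k t x) = sets borel \<and> prob_space (k t x)"
    using mk unfolding markov_kernel_semigroup_def by blast
  have R: "\<And>x y. measure (k t0 x) A = 0 \<longleftrightarrow> measure (k t0 y) A = 0"
  proof -
    fix x y
    have "equiv_measures (k t0 x) (k t0 y)" using reg unfolding regular_at_def by blast
    hence "null_sets (k t0 x) = null_sets (k t0 y)"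
      unfolding equiv_measures_def absolutely_continuous_def by blast
    moreover have "prob_space (k t0 x)" "prob_space (k t0 y)" "sets (k t0 x) = sets borel" "sets (k t0 y) = sets borel"
      using P t0 by auto
    ultimately show "measure (k t0 x) A = 0 \<longleftrightarrow> measure (k t0 y) A = 0"
      using null_iff_prob A by metis
  qed
  define r where "r = s - t0"
  have r: "r \<ge> 0" using s r_def by simp
  have eq: "measure (k s x) A = (\<integral>z. measure (k t0 z) A \<partial>(k r x))"
    using mk r t0 A unfolding markov_kernel_semigroup_def r_def
    by (metis add.commute diff_add_cancel less_imp_le)
  have ps: "prob_space (k r x)" and sr: "sets (k r x) = sets borel" using P r by auto
  have meas: "(\<lambda>z. measure (k t0 z) A) \<in> borel_measurable (k r x)"
    using mk t0 A unfolding markov_kernel_semigroup_def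
    by (simp add: measurable_cong_sets[OF sr refl])
  have int: "integrable (k r x) (\<lambda>z. measure (k t0 z) A)"
  proof (rule finite_measure.integrable_const_bound[where B=1])
    show "finite_measure (k r x)" using ps by (simp add: prob_space_def)
    show "AE z in k r x. norm (measure (k t0 z) A) \<le> 1"
      using P t0 by (auto intro!: prob_space.prob_le_1)
  qed (use meas in simp)
  show ?thesis
  proof
    assume "measure (k s x) A = 0"
    hence "(\<integral>z. measure (k t0 z) A \<partial>(k r x)) = 0" using eq by simp
    hence "AE z in k r x. measure (k t0 z) A = 0"
      using integral_nonneg_eq_0_iff_AE[OF int] by simp
    then obtain z where "measure (k t0 z) A = 0"
    proof -
      assume h: "\<And>z. measure (k t0 z) A = 0 \<Longrightarrow> thesis"
      show thesis
      proof (rule ccontr)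
        assume "\<not> thesis"
        with h have "AE z in k r x. False"
          using \<open>AE z in k r x. measure (k t0 z) A = 0\<close> by (auto elim: AE_mp)
        thus False using ps using prob_space.AE_False by blast
      qed
    qed
    thus "measure (k t0 y) A = 0" using R by blast
  next
    assume "measure (k t0 y) A = 0"
    hence "\<And>z. measure (k t0 z) A = 0" using R by blast
    thus "measure (k s x) A = 0" using eq by simp
  qed
qed

theorem mainTheorem10:
  fixes k :: "real \<Rightarrow> 'a::polish_space \<Rightarrow> 'a measure" and t0 :: real
  assumes "markov_kernel_semigroup k"
    and "t0 > 0"
    and "regular_at k t0"
  shows "(\<forall>s\<ge>t0. regular_at k s) \<and>
         (\<forall>s t x y. s \<ge> t0 \<longrightarrow> t \<ge> t0 \<longrightarrow> equiv_measures (k s x) (k t y))"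
proof -
  have P: "\<And>t x. t \<ge> 0 \<Longrightarrow> sets (k t x) = sets borel \<and> prob_space (k t x)"
    using assms(1) unfolding markov_kernel_semigroup_def by blast
  have E: "equiv_measures (k s x) (k t y)" if "s \<ge> t0" "t \<ge> t0" for s t x y
  proof -
    have ps: "prob_space (k s x)" "prob_space (k t y)" "sets (k s x) = sets borel" "sets (k t y) = sets borel"
      using P that assms(2) by auto
    have "\<And>A. A \<in> sets borel \<Longrightarrow> measure (k s x) A = 0 \<longleftrightarrow> measure (k t y) A = 0"
      using key[OF assms that(1)] key[OF assms that(2)] by metis
    hence "null_sets (k s x) = null_sets (k t y)"
      using ps null_iff_prob by (metis (no_types, lifting) subsetI subset_antisym)
    thus ?thesis unfolding equiv_measures_def absolutely_continuous_def by simp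
  qed
  show ?thesis using E unfolding regular_at_def by auto
qed

end
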